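(* Let $m \ge 1$ and let $S_1 \neq S_2$ be finite nonempty multisets of vectors in $\mathbb{R}^m$ with $|S_1| = |S_2|$. For $p \in (0,1)$ and $i \in \{1,2\}$, let $M_i^{(p)}$ be the random vector obtained by retaining each element of $S_i$ independently with probability $1-p$ (dropping it with probability $p$) and taking the mean of the retained elements (with the convention that the mean of an empty multiset is $0$). Then there exists $p \in (0,1)$ such that $M_1^{(p)}$ and $M_2^{(p)}$ have different distributions; that is, $S_1$ and $S_2$ can be distinguished by a DropGNN with mean neighborhood aggregation.
   Context: In a DropGNN with mean neighborhood aggregation, a node $u$ whose neighbors have the multiset of feature vectors $S$ computes, in each run, the mean of the features of those neighbors that were not dropped; each node is dropped independently with probability $p$ in each run, and the results of many independent runs are aggregated. Two neighbor multisets are distinguishable if the resulting distributions of aggregated values differ. *)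

theory Defs
  imports "HOL-Analysis.Analysis" "HOL-Probability.Probability" "HOL-Library.Multiset"
begin

definition ms_mean :: "('a::real_vector) multiset \<Rightarrow> 'a" where
  "ms_mean M = (if M = {#} then 0 else (1 / real (size M)) *\<^sub>R sum_mset M)"

definition retain_pmf_list :: "real \<Rightarrow> 'a list \<Rightarrow> 'a multiset pmf" where
  "retain_pmf_list p xs =
     map_pmf (\<lambda>b. mset (map (\<lambda>i. xs ! i) (filter b [0..<length xs])))
       (Pi_pmf {..<length xs} False (\<lambda>_. bernoulli_pmf (1 - p)))"

text \<open>For a multiset S, enumerate its elements by some list (the resulting distribution does not
  depend on the enumeration).\<close>
definition retain_pmf :: "real \<Rightarrow> 'a multiset \<Rightarrow> 'a multiset pmf" where
  "retain_pmf p S = retain_pmf_list p (SOME xs. mset xs = S)"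

definition drop_mean_pmf :: "real \<Rightarrow> ('a::real_vector) multiset \<Rightarrow> 'a pmf" where
  "drop_mean_pmf p S = map_pmf ms_mean (retain_pmf p S)"

end

theory Submission
  imports Defs
begin

definition sel :: "'a list \<Rightarrow> nat set \<Rightarrow> 'a multiset" where
  "sel xs B = mset (map (\<lambda>i. xs ! i) (filter (\<lambda>i. i \<in> B) [0..<length xs]))"

lemma prob_formula:
  assumes "0 \<le> p" "p \<le> 1"
  shows "pmf (map_pmf g (Pi_pmf {..<n} False (\<lambda>_. bernoulli_pmf (1-p)))) v =
    (\<Sum>B\<in>{B. B \<subseteq> {..<n} \<and> g (\<lambda>i. i \<in> B) = v}. (1-p)^card B * p^(n - card B))"
proof -
  define M where "M = Pi_pmf {..<n} False (\<lambda>_. bernoulli_pmf (1-p))"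
  define E where "E = PiE_dflt {..<n} False (\<lambda>_. UNIV :: bool set)"
  have finE: "finite E" unfolding E_def by auto
  have pmfM: "pmf M b = (if (\<forall>x. x \<notin> {..<n} \<longrightarrow> b x = False) then \<Prod>x\<in>{..<n}. pmf (bernoulli_pmf (1-p)) (b x) else 0)" for b
    unfolding M_def by (rule pmf_Pi) auto
  have "pmf (map_pmf g M) v = measure M (g -` {v})" by (rule pmf_map)
  also have "\<dots> = measure M (g -` {v} \<inter> E)"
    by (rule measure_prob_cong_0) (auto simp: pmfM E_def PiE_dflt_def)
  also have "\<dots> = sum (pmf M) (g -` {v} \<inter> E)"
    using finE by (intro measure_measure_pmf_finite) auto
  also have "\<dots> = (\<Sum>B\<in>{B. B \<subseteq> {..<n} \<and> g (\<lambda>i. i \<in> B) = v}. pmf M (\<lambda>i. i \<in> B))"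
  proof (rule sum.reindex_bij_betw[symmetric])
    show "bij_betw (\<lambda>B i. i \<in> B) {B. B \<subseteq> {..<n} \<and> g (\<lambda>i. i \<in> B) = v} (g -` {v} \<inter> E)"
      by (rule bij_betwI[of _ _ _ "\<lambda>b. {i. b i}"]) (auto simp: E_def PiE_dflt_def)
  qed
  also have "\<dots> = (\<Sum>B\<in>{B. B \<subseteq> {..<n} \<and> g (\<lambda>i. i \<in> B) = v}. (1-p)^card B * p^(n - card B))"
  proof (rule sum.cong[OF refl])
    fix B assume "B \<in> {B. B \<subseteq> {..<n} \<and> g (\<lambda>i. i \<in> B) = v}"
    then have B: "B \<subseteq> {..<n}" by auto
    have "pmf M (\<lambda>i. i \<in> B) = (\<Prod>x\<in>{..<n}. if x \<in> B then 1 - p else p)"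
      using B assms by (auto simp: pmfM intro!: prod.cong)
    also have "\<dots> = prod (\<lambda>_. 1-p) ({..<n} \<inter> {x. x \<in> B}) * prod (\<lambda>_. p) ({..<n} \<inter> - {x. x \<in> B})"
      by (rule prod.If_cases) auto
    also have "{..<n} \<inter> {x. x \<in> B} = B" using B by auto
    also have "card ({..<n} \<inter> - {x. x \<in> B}) = n - card B"
    proof -
      have "{..<n} \<inter> - {x. x \<in> B} = {..<n} - B" by auto
      then show ?thesis using B by (simp add: card_Diff_subset finite_subset)
    qed
    ultimately show "pmf M (\<lambda>i. i \<in> B) = (1-p)^card B * p^(n - card B)"
      by simp
  qed
  finally show ?thesis unfolding M_def .
qed


definition G :: "'a::real_vector \<Rightarrow> 'a list \<Rightarrow> real \<Rightarrow> real" where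
  "G v xs p = (\<Sum>B\<in>{B. B \<subseteq> {..<length xs} \<and> ms_mean (sel xs B) = v}.
      (1-p)^(card B - 1) * p^(length xs - card B))"

lemma pmf_G:
  assumes "0 \<le> p" "p \<le> 1" "v \<noteq> 0"
  shows "pmf (map_pmf ms_mean (retain_pmf_list p xs)) v = (1-p) * G v xs p"
proof -
  have "pmf (map_pmf ms_mean (retain_pmf_list p xs)) v =
     pmf (map_pmf (\<lambda>b. ms_mean (mset (map (\<lambda>i. xs ! i) (filter b [0..<length xs]))))
       (Pi_pmf {..<length xs} False (\<lambda>_. bernoulli_pmf (1 - p)))) v"
    unfolding retain_pmf_list_def by (simp add: pmf.map_comp o_def)
  also have "\<dots> = (\<Sum>B\<in>{B. B \<subseteq> {..<length xs} \<and> ms_mean (sel xs B) = v}.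
      (1-p)^card B * p^(length xs - card B))"
    by (subst prob_formula[OF assms(1,2)]) (simp add: sel_def)
  also have "\<dots> = (\<Sum>B\<in>{B. B \<subseteq> {..<length xs} \<and> ms_mean (sel xs B) = v}.
      (1-p) * ((1-p)^(card B - 1) * p^(length xs - card B)))"
  proof (rule sum.cong[OF refl])
    fix B assume B: "B \<in> {B. B \<subseteq> {..<length xs} \<and> ms_mean (sel xs B) = v}"
    have "B \<noteq> {}"
    proof
      assume "B = {}"
      then have "sel xs B = {#}" by (simp add: sel_def)
      then show False using B assms(3) by (simp add: ms_mean_def)
    qed
    moreover have "finite B" using B finite_subset by blast
    ultimately have "card B > 0" by (simp add: card_gt_0_iff)
    then have "card B = Suc (card B - 1)" by simp
    then show "(1-p)^card B * p^(length xs - card B) = (1-p) * ((1-p)^(card B - 1) * p^(length xs - card B))"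
      by (metis mult.assoc power_Suc)
  qed
  also have "\<dots> = (1-p) * G v xs p" unfolding G_def by (simp add: sum_distrib_left)
  finally show ?thesis .
qed

lemma filter_eq_single: "filter (\<lambda>j. j = i) [0..<n] = (if i < n then [i] else [])"
  by (induction n) auto

lemma G_tendsto: "((G v xs) \<longlongrightarrow> G v xs 1) (at_left 1)"
proof -
  have "isCont (G v xs) 1" unfolding G_def by (intro continuous_intros)
  then show ?thesis by (simp add: isCont_def filterlim_at_split)
qed

lemma G_one: assumes v: "v \<noteq> 0" shows "G v xs 1 = count (mset xs) v"
proof -
  let ?S = "{B. B \<subseteq> {..<length xs} \<and> ms_mean (sel xs B) = v}"
  have fin: "finite ?S" by (rule finite_subset[of _ "Pow {..<length xs}"]) auto
  have "G v xs 1 = (\<Sum>B\<in>?S. if card B = 1 then 1 else 0)"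
    unfolding G_def
  proof (intro sum.cong refl)
    fix B assume B: "B \<in> ?S"
    have "B \<noteq> {}"
    proof
      assume "B = {}"
      then have "sel xs B = {#}" by (simp add: sel_def)
      then show False using B v by (simp add: ms_mean_def)
    qed
    moreover have "finite B" using B finite_subset by blast
    ultimately have "card B > 0" by (simp add: card_gt_0_iff)
    then show "(1 - 1) ^ (card B - 1) * 1 ^ (length xs - card B) = (if card B = 1 then 1 else (0::real))"
      by (cases "card B = 1") simp_all
  qed
  also have "\<dots> = card {B\<in>?S. card B = 1}"
    using sum.inter_filter[OF fin, of "\<lambda>_. 1::real" "\<lambda>B. card B = 1"] by simp
  also have "{B\<in>?S. card B = 1} = (\<lambda>i. {i}) ` {i. i < length xs \<and> xs ! i = v}"
  proof (intro equalityI subsetI)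
    fix B assume "B \<in> {B\<in>?S. card B = 1}"
    then obtain i where i: "B = {i}" "i < length xs" "ms_mean (sel xs B) = v"
      by (auto simp: card_Suc_eq)
    have "sel xs B = {# xs ! i #}" using i by (simp add: sel_def filter_eq_single)
    then have "xs ! i = v" using i by (simp add: ms_mean_def)
    then show "B \<in> (\<lambda>i. {i}) ` {i. i < length xs \<and> xs ! i = v}" using i by auto
  next
    fix B assume "B \<in> (\<lambda>i. {i}) ` {i. i < length xs \<and> xs ! i = v}"
    then obtain i where i: "B = {i}" "i < length xs" "xs ! i = v" by auto
    have "sel xs B = {# xs ! i #}" using i by (simp add: sel_def filter_eq_single)
    then show "B \<in> {B\<in>?S. card B = 1}" using i by (simp add: ms_mean_def)
  qed
  also have "card \<dots> = card {i. i < length xs \<and> xs ! i = v}"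
    by (rule card_image) (auto simp: inj_on_def)
  also have "\<dots> = count (mset xs) v"
    by (simp add: count_mset count_list_eq_length_filter length_filter_conv_card) (rule arg_cong[where f=card], auto)
  finally show ?thesis by simp
qed

theorem lemma1:
  fixes S1 S2 :: "(real ^ 'm) multiset"
  assumes "S1 \<noteq> S2"
    and "S1 \<noteq> {#}" and "S2 \<noteq> {#}"
    and "size S1 = size S2"
  shows "\<exists>p::real. 0 < p \<and> p < 1 \<and> drop_mean_pmf p S1 \<noteq> drop_mean_pmf p S2"
proof -
  have "\<exists>v. v \<noteq> 0 \<and> count S1 v \<noteq> count S2 v"
  proof (rule ccontr)
    assume "\<not> ?thesis"
    then have h: "\<And>v. v \<noteq> 0 \<Longrightarrow> count S1 v = count S2 v" by auto
    have f: "filter_mset (\<lambda>x. x \<noteq> 0) S1 = filter_mset (\<lambda>x. x \<noteq> 0) S2"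
      by (rule multiset_eqI) (simp add: h)
    have sz: "size S = size (filter_mset (\<lambda>x. x \<noteq> 0) S) + count S 0" for S :: "(real ^ 'm) multiset"
    proof -
      have "size S = size (filter_mset (\<lambda>x. x = 0) S + filter_mset (\<lambda>x. \<not> x = 0) S)"
        using multiset_partition[of S "\<lambda>x. x = 0"] by simp
      also have "\<dots> = size (filter_mset (\<lambda>x. x \<noteq> 0) S) + count S 0"
        by (simp add: filter_eq_replicate_mset)
      finally show ?thesis .
    qed
    have "count S1 0 = count S2 0" using sz[of S1] sz[of S2] f assms(4) by simp
    then have "S1 = S2" using h by (metis multiset_eqI)
    then show False using assms(1) by simp
  qed
  then obtain v where v: "v \<noteq> 0" "count S1 v \<noteq> count S2 v" by blast
  define xs1 where "xs1 = (SOME xs. mset xs = S1)"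
  define xs2 where "xs2 = (SOME xs. mset xs = S2)"
  have m1: "mset xs1 = S1" unfolding xs1_def by (rule someI_ex[OF ex_mset])
  have m2: "mset xs2 = S2" unfolding xs2_def by (rule someI_ex[OF ex_mset])
  have d1: "drop_mean_pmf p S1 = map_pmf ms_mean (retain_pmf_list p xs1)" for p
    unfolding drop_mean_pmf_def retain_pmf_def xs1_def ..
  have d2: "drop_mean_pmf p S2 = map_pmf ms_mean (retain_pmf_list p xs2)" for p
    unfolding drop_mean_pmf_def retain_pmf_def xs2_def ..
  have lim: "((\<lambda>p. G v xs1 p - G v xs2 p) \<longlongrightarrow> G v xs1 1 - G v xs2 1) (at_left 1)"
    by (intro tendsto_diff G_tendsto)
  have ne: "G v xs1 1 - G v xs2 1 \<noteq> 0" using G_one[OF v(1)] m1 m2 v(2) by simp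
  have "eventually (\<lambda>p. G v xs1 p - G v xs2 p \<noteq> 0) (at_left 1)"
    by (rule tendsto_imp_eventually_ne[OF lim ne])
  moreover have "eventually (\<lambda>p. p \<in> {0<..<1}) (at_left (1::real))"
    by (rule eventually_at_left_real) simp
  ultimately have "eventually (\<lambda>p. G v xs1 p - G v xs2 p \<noteq> 0 \<and> p \<in> {0<..<1}) (at_left 1)"
    by (rule eventually_conj)
  then obtain p where p: "G v xs1 p - G v xs2 p \<noteq> 0" "0 < p" "p < 1"
    using eventually_happens'[OF trivial_limit_at_left_real] by fastforce
  have "drop_mean_pmf p S1 \<noteq> drop_mean_pmf p S2"
  proof
    assume "drop_mean_pmf p S1 = drop_mean_pmf p S2"
    then have "pmf (drop_mean_pmf p S1) v = pmf (drop_mean_pmf p S2) v" by simp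
    then have "(1-p) * G v xs1 p = (1-p) * G v xs2 p"
      unfolding d1 d2 using pmf_G[of p v] p v(1) by simp
    then show False using p by simp
  qed
  then show ?thesis using p by blast
qed

end
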